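(* Let $X$ be a real or complex Banach space, $(A(n))_{n\in\mathbb{N}}$ a sequence in $\mathcal{B}(X)$, and $P:\mathbb{N}\to\mathcal{B}(X)$ a family of projections compatible with the system $x_{n+1}=A(n)x_n$, with complementary family $Q(n)=I-P(n)$. Then the system is $P$-uniformly exponentially dichotomic if and only if there exists a constant $D>0$ such that \[ \sum_{j=m}^{\infty}\|\mathcal{A}_P(j,n)x\|+\sum_{k=n}^{m}\|\mathcal{A}_Q(k,n)x\|\le D\big(\|\mathcal{A}_P(m,n)x\|+\|\mathcal{A}_Q(m,n)x\|\big) \] for all $(m,n)\in\Delta$ and all $x\in X$.
   Context: $\mathbb{N}$ denotes the set of positive integers; $\mathcal{B}(X)$ is the Banach algebra of bounded linear operators on $X$, and $I$ is the identity operator. $\Delta=\{(m,n)\in\mathbb{N}^2: m\ge n\}$. A family of projections is a map $P:\mathbb{N}\to\mathcal{B}(X)$ with $P(n)^2=P(n)$ for all $n$; its complementary family is $Q(n)=I-P(n)$. $P$ is compatible with the system $x_{n+1}=A(n)x_n$ if $A(n+1)P(n)=P(n+1)A(n+1)$ for all $n\in\mathbb{N}$. For $(m,n)\in\Delta$ define $\mathcal{A}_P(m,n)=A(m)\cdots A(n+1)P(n)$ if $m>n$ and $\mathcal{A}_P(n,n)=P(n)$; similarly $\mathcal{A}_Q(m,n)=A(m)\cdots A(n+1)Q(n)$ if $m>n$ and $\mathcal{A}_Q(n,n)=Q(n)$. The system is $P$-uniformly exponentially dichotomic if there exist constants $N\ge1$ and $\alpha>0$ such that $e^{\alpha(m-n)}\big(\|\mathcal{A}_P(m,n)x\|+\|Q(n)x\|\big)\le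 N\big(\|P(n)x\|+\|\mathcal{A}_Q(m,n)x\|\big)$ for all $(m,n)\in\Delta$, $x\in X$. *)

theory Defs
  imports "HOL-Analysis.Analysis"
begin

text \<open>Indices range over the positive integers; we use nat and guard with n \<ge> 1.
  evol A n k = A(n+k) o ... o A(n+1)  (identity for k = 0).\<close>

primrec evol :: "(nat \<Rightarrow> 'a::real_normed_vector \<Rightarrow>\<^sub>L 'a) \<Rightarrow> nat \<Rightarrow> nat \<Rightarrow> 'a \<Rightarrow>\<^sub>L 'a" where
  "evol A n 0 = id_blinfun"
| "evol A n (Suc k) = A (n + Suc k) o\<^sub>L evol A n k"

definition calA :: "(nat \<Rightarrow> 'a::real_normed_vector \<Rightarrow>\<^sub>L 'a) \<Rightarrow> (nat \<Rightarrow> 'a \<Rightarrow>\<^sub>L 'a) \<Rightarrow> nat \<Rightarrow> nat \<Rightarrow> 'a \<Rightarrow>\<^sub>L 'a" where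
  "calA A P m n = evol A n (m - n) o\<^sub>L P n"

definition compl_proj :: "(nat \<Rightarrow> 'a::real_normed_vector \<Rightarrow>\<^sub>L 'a) \<Rightarrow> nat \<Rightarrow> 'a \<Rightarrow>\<^sub>L 'a" where
  "compl_proj P n = id_blinfun - P n"

definition P_unif_exp_dich :: "(nat \<Rightarrow> 'a::real_normed_vector \<Rightarrow>\<^sub>L 'a) \<Rightarrow> (nat \<Rightarrow> 'a \<Rightarrow>\<^sub>L 'a) \<Rightarrow> bool" where
  "P_unif_exp_dich A P \<longleftrightarrow>
     (\<exists>N \<alpha>::real. N \<ge> 1 \<and> \<alpha> > 0 \<and>
       (\<forall>m n x. 1 \<le> n \<longrightarrow> n \<le> m \<longrightarrow>
          exp (\<alpha> * real (m - n)) *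
            (norm (blinfun_apply (calA A P m n) x) + norm (blinfun_apply (compl_proj P n) x))
          \<le> N * (norm (blinfun_apply (P n) x) + norm (blinfun_apply (calA A (compl_proj P) m n) x))))"

end

theory Submission
  imports Defs
begin

lemma evol_add: "evol A n (k + l) = evol A (n + k) l o\<^sub>L evol A n k"
  by (induction l) (auto intro!: blinfun_eqI simp: add.assoc)

lemma evol_add_apply: "blinfun_apply (evol A n (k + l)) x = blinfun_apply (evol A (n + k) l) (blinfun_apply (evol A n k) x)"
  by (simp add: evol_add)

lemma evol_P:
  assumes compat: "\<And>n. 1 \<le> n \<Longrightarrow> A (n + 1) o\<^sub>L P n = P (n + 1) o\<^sub>L A (n + 1)"
    and "1 \<le> n"
  shows "blinfun_apply (evol A n k) (blinfun_apply (P n) x) = blinfun_apply (P (n + k)) (blinfun_apply (evol A n k) x)"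
proof (induction k)
  case 0 then show ?case by simp
next
  case (Suc k)
  have c: "blinfun_apply (A (n + k + 1)) (blinfun_apply (P (n+k)) y) = blinfun_apply (P (n + k + 1)) (blinfun_apply (A (n + k + 1)) y)" for y
    using compat[of "n+k"] assms(2) by (metis blinfun_apply_blinfun_compose le_add1 order_trans)
  show ?case using Suc c by simp
qed

context
  fixes A P :: "nat \<Rightarrow> ('a::banach \<Rightarrow>\<^sub>L 'a)"
  assumes proj: "\<And>n. 1 \<le> n \<Longrightarrow> P n o\<^sub>L P n = P n"
    and compat: "\<And>n. 1 \<le> n \<Longrightarrow> A (n + 1) o\<^sub>L P n = P (n + 1) o\<^sub>L A (n + 1)"
begin

lemma PP: "1 \<le> n \<Longrightarrow> blinfun_apply (P n) (blinfun_apply (P n) x) = blinfun_apply (P n) x"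
  using proj by (metis blinfun_apply_blinfun_compose)

lemma PQ: "1 \<le> n \<Longrightarrow> blinfun_apply (P n) (x - blinfun_apply (P n) x) = 0"
  using PP by (simp add: blinfun.diff_right)

lemma eP: "1 \<le> n \<Longrightarrow> blinfun_apply (evol A n k) (blinfun_apply (P n) x) = blinfun_apply (P (n + k)) (blinfun_apply (evol A n k) x)"
  using evol_P[of A P n k x] compat by blast

lemma cP: "blinfun_apply (calA A P m n) x = blinfun_apply (evol A n (m-n)) (blinfun_apply (P n) x)"
  by (simp add: calA_def)

lemma cQ: "blinfun_apply (calA A (compl_proj P) m n) x = blinfun_apply (evol A n (m-n)) (x - blinfun_apply (P n) x)"
  by (simp add: calA_def compl_proj_def blinfun.diff_left)

lemma cQP: "blinfun_apply (compl_proj P n) x = x - blinfun_apply (P n) x"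
  by (simp add: compl_proj_def blinfun.diff_left)

lemma F1:
  assumes "1 \<le> n" "n \<le> m" "m \<le> j"
  shows "blinfun_apply (calA A P j m) (blinfun_apply (calA A P m n) x) = blinfun_apply (calA A P j n) x"
proof -
  have "blinfun_apply (P m) (blinfun_apply (calA A P m n) x) = blinfun_apply (calA A P m n) x"
    using eP[of n "m-n" "blinfun_apply (P n) x"] assms PP by (simp add: cP)
  moreover have "j - n = (m - n) + (j - m)" "n + (m - n) = m" using assms by auto
  ultimately show ?thesis
    using evol_add_apply[of A n "m-n" "j-m"] by (simp add: cP)
qed

lemma F1':
  assumes "1 \<le> n" "n \<le> m" "m \<le> j"
  shows "blinfun_apply (calA A (compl_proj P) j m) (blinfun_apply (calA A P m n) x) = 0"
proof -
  have "blinfun_apply (P m) (blinfun_apply (calA A P m n) x) = blinfun_apply (calA A P m n) x"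
    using eP[of n "m-n" "blinfun_apply (P n) x"] assms PP by (simp add: cP)
  then show ?thesis by (simp add: cQ)
qed

lemma F1'':
  assumes "1 \<le> n" "n \<le> m"
  shows "blinfun_apply (compl_proj P m) (blinfun_apply (calA A P m n) x) = 0"
proof -
  have "blinfun_apply (P m) (blinfun_apply (calA A P m n) x) = blinfun_apply (calA A P m n) x"
    using eP[of n "m-n" "blinfun_apply (P n) x"] assms PP by (simp add: cP)
  then show ?thesis by (simp add: cQP)
qed

lemma Pk_Q:
  assumes "1 \<le> n" "n \<le> k"
  shows "blinfun_apply (P k) (blinfun_apply (calA A (compl_proj P) k n) x) = 0"
  using eP[of n "k-n" "x - blinfun_apply (P n) x"] assms PQ[of n x] by (simp add: cQ)

lemma F4:
  assumes "1 \<le> n" "n \<le> k" "k \<le> m"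
  shows "blinfun_apply (calA A (compl_proj P) m k) (blinfun_apply (calA A (compl_proj P) k n) x) = blinfun_apply (calA A (compl_proj P) m n) x"
proof -
  have "m - n = (k - n) + (m - k)" "n + (k - n) = k" using assms by auto
  then show ?thesis
    using evol_add_apply[of A n "k-n" "m-k"] Pk_Q[OF assms(1,2), of x] by (simp add: cQ[of m k])  (simp add: cQ)
qed

lemma F4':
  assumes "1 \<le> n" "n \<le> k" "k \<le> m"
  shows "blinfun_apply (calA A P m k) (blinfun_apply (calA A (compl_proj P) k n) x) = 0"
  using Pk_Q[OF assms(1,2), of x] by (simp add: cP)

lemma F4'':
  assumes "1 \<le> n" "n \<le> k"
  shows "blinfun_apply (compl_proj P k) (blinfun_apply (calA A (compl_proj P) k n) x) = blinfun_apply (calA A (compl_proj P) k n) x"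
  using Pk_Q[OF assms(1,2), of x] by (simp add: cQP)

lemma F6:
  assumes "1 \<le> n"
  shows "blinfun_apply (calA A (compl_proj P) m n) (blinfun_apply (P n) x) = 0"
    "blinfun_apply (calA A P m n) (blinfun_apply (P n) x) = blinfun_apply (calA A P m n) x"
    "blinfun_apply (calA A (compl_proj P) m n) (x - blinfun_apply (P n) x) = blinfun_apply (calA A (compl_proj P) m n) x"
    "blinfun_apply (calA A P m n) (x - blinfun_apply (P n) x) = 0"
  using assms PP[OF assms, of x] PQ[OF assms, of x] by (simp_all add: cP cQ blinfun.diff_right)

lemma F1P:
  assumes "1 \<le> n" "n \<le> m"
  shows "blinfun_apply (P m) (blinfun_apply (calA A P m n) x) = blinfun_apply (calA A P m n) x"
    using eP[of n "m-n" "blinfun_apply (P n) x"] assms PP by (simp add: cP)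

lemma dich_imp:
  assumes "P_unif_exp_dich A P"
  shows "\<exists>D::real. D > 0 \<and>
      (\<forall>m n x. 1 \<le> n \<longrightarrow> n \<le> m \<longrightarrow>
         summable (\<lambda>j. norm (blinfun_apply (calA A P (m + j) n) x)) \<and>
         (\<Sum>j. norm (blinfun_apply (calA A P (m + j) n) x))
           + (\<Sum>k=n..m. norm (blinfun_apply (calA A (compl_proj P) k n) x))
         \<le> D * (norm (blinfun_apply (calA A P m n) x)
                 + norm (blinfun_apply (calA A (compl_proj P) m n) x)))"
proof -
  obtain N \<alpha> :: real where N: "N \<ge> 1" and al: "\<alpha> > 0" and
    H: "\<And>m n x. 1 \<le> n \<Longrightarrow> n \<le> m \<Longrightarrow>
          exp (\<alpha> * real (m - n)) *
            (norm (blinfun_apply (calA A P m n) x) + norm (blinfun_apply (compl_proj P n) x))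
          \<le> N * (norm (blinfun_apply (P n) x) + norm (blinfun_apply (calA A (compl_proj P) m n) x))"
    using assms unfolding P_unif_exp_dich_def by blast
  define r where "r = exp (- \<alpha>)"
  have r0: "0 < r" and r1: "r < 1" using al by (auto simp: r_def)
  have rexp: "r ^ k * exp (\<alpha> * real k) = 1" for k
    by (simp add: r_def exp_of_nat2_mult[symmetric] exp_add[symmetric])
  have scale: "z \<le> N * a * r ^ k" if "exp (\<alpha> * real k) * z \<le> N * a" for z a k
  proof -
    have "z = r ^ k * (exp (\<alpha> * real k) * z)" using rexp[of k] by (simp add: algebra_simps)
    also have "\<dots> \<le> r ^ k * (N * a)" using that r0 by (intro mult_left_mono) auto
    finally show ?thesis by (simp add: algebra_simps)
  qed
  have stab: "norm (blinfun_apply (calA A P (m + j) n) x) \<le> N * norm (blinfun_apply (calA A P m n) x) * r ^ j"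
    if "1 \<le> n" "n \<le> m" for m n j x
  proof -
    let ?y = "blinfun_apply (calA A P m n) x"
    have "exp (\<alpha> * real (m + j - m)) *
            (norm (blinfun_apply (calA A P (m+j) m) ?y) + norm (blinfun_apply (compl_proj P m) ?y))
          \<le> N * (norm (blinfun_apply (P m) ?y) + norm (blinfun_apply (calA A (compl_proj P) (m+j) m) ?y))"
      using H[of m "m+j" ?y] that by simp
    then have "exp (\<alpha> * real j) * norm (blinfun_apply (calA A P (m + j) n) x) \<le> N * norm ?y"
      using F1[of n m "m+j" x] F1'[of n m "m+j" x] F1''[of n m x] F1P[of n m x] that by simp
    from scale[OF this] show ?thesis by (simp add: algebra_simps)
  qed
  have unst: "norm (blinfun_apply (calA A (compl_proj P) k n) x) \<le> N * norm (blinfun_apply (calA A (compl_proj P) m n) x) * r ^ (m - k)"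
    if "1 \<le> n" "n \<le> k" "k \<le> m" for m n k x
  proof -
    let ?y = "blinfun_apply (calA A (compl_proj P) k n) x"
    have "exp (\<alpha> * real (m - k)) *
            (norm (blinfun_apply (calA A P m k) ?y) + norm (blinfun_apply (compl_proj P k) ?y))
          \<le> N * (norm (blinfun_apply (P k) ?y) + norm (blinfun_apply (calA A (compl_proj P) m k) ?y))"
      using H[of k m ?y] that by simp
    then have "exp (\<alpha> * real (m - k)) * norm ?y \<le> N * norm (blinfun_apply (calA A (compl_proj P) m n) x)"
      using F4[of n k m x] F4'[of n k m x] F4''[of n k x] Pk_Q[of n k x] that by simp
    from scale[OF this] show ?thesis by (simp add: algebra_simps)
  qed
  have geo: "(\<Sum>k=n..m. r ^ (m - k)) \<le> 1 / (1 - r)" if "n \<le> m" for n m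
  proof -
    have "(\<Sum>k=n..m. r ^ (m - k)) = (\<Sum>i<Suc (m - n). r ^ i)"
      by (rule sum.reindex_bij_witness[of _ "\<lambda>i. m - i" "\<lambda>k. m - k"]) (use that in auto)
    also have "\<dots> \<le> (\<Sum>i. r ^ i)"
      by (rule sum_le_suminf) (use r0 r1 in \<open>auto intro: summable_geometric\<close>)
    also have "\<dots> = 1 / (1 - r)" using r0 r1 by (simp add: suminf_geometric)
    finally show ?thesis .
  qed
  define D where "D = N / (1 - r)"
  have D0: "D > 0" using N r1 by (simp add: D_def)
  show ?thesis
  proof (intro exI[of _ D] conjI allI impI D0)
    fix m n x assume nm: "1 \<le> (n::nat)" "n \<le> m"
    let ?a = "norm (blinfun_apply (calA A P m n) x)"
    let ?b = "norm (blinfun_apply (calA A (compl_proj P) m n) x)"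
    have sg: "summable (\<lambda>j. N * ?a * r ^ j)"
      using r0 r1 by (intro summable_mult summable_geometric) auto
    show sm: "summable (\<lambda>j. norm (blinfun_apply (calA A P (m + j) n) x))"
      by (rule summable_comparison_test[OF _ sg]) (use stab nm in auto)
    have s1: "(\<Sum>j. norm (blinfun_apply (calA A P (m + j) n) x)) \<le> (\<Sum>j. N * ?a * r ^ j)"
      by (rule suminf_le[OF _ sm sg]) (use stab nm in auto)
    also have "\<dots> = D * ?a" using r0 r1 by (simp add: suminf_mult suminf_geometric D_def)
    finally have s1: "(\<Sum>j. norm (blinfun_apply (calA A P (m + j) n) x)) \<le> D * ?a" .
    have "(\<Sum>k=n..m. norm (blinfun_apply (calA A (compl_proj P) k n) x)) \<le> (\<Sum>k=n..m. N * ?b * r ^ (m - k))"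
      by (rule sum_mono) (use unst nm in auto)
    also have "\<dots> = N * ?b * (\<Sum>k=n..m. r ^ (m - k))" by (simp add: sum_distrib_left)
    also have "\<dots> \<le> N * ?b * (1 / (1 - r))"
      using geo[OF nm(2)] N by (intro mult_left_mono) auto
    also have "\<dots> = D * ?b" by (simp add: D_def)
    finally show "(\<Sum>j. norm (blinfun_apply (calA A P (m + j) n) x))
           + (\<Sum>k=n..m. norm (blinfun_apply (calA A (compl_proj P) k n) x)) \<le> D * (?a + ?b)"
      using s1 by (simp add: distrib_left)
  qed
qed

lemma imp_dich:
  assumes "\<exists>D::real. D > 0 \<and>
      (\<forall>m n x. 1 \<le> n \<longrightarrow> n \<le> m \<longrightarrow>
         summable (\<lambda>j. norm (blinfun_apply (calA A P (m + j) n) x)) \<and>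
         (\<Sum>j. norm (blinfun_apply (calA A P (m + j) n) x))
           + (\<Sum>k=n..m. norm (blinfun_apply (calA A (compl_proj P) k n) x))
         \<le> D * (norm (blinfun_apply (calA A P m n) x)
                 + norm (blinfun_apply (calA A (compl_proj P) m n) x)))"
  shows "P_unif_exp_dich A P"
proof -
  obtain D0 :: real where D0: "D0 > 0" and H0: "\<And>m n x. 1 \<le> n \<Longrightarrow> n \<le> m \<Longrightarrow>
         summable (\<lambda>j. norm (blinfun_apply (calA A P (m + j) n) x)) \<and>
         (\<Sum>j. norm (blinfun_apply (calA A P (m + j) n) x))
           + (\<Sum>k=n..m. norm (blinfun_apply (calA A (compl_proj P) k n) x))
         \<le> D0 * (norm (blinfun_apply (calA A P m n) x)
                 + norm (blinfun_apply (calA A (compl_proj P) m n) x))"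
    using assms by blast
  define D where "D = max D0 2"
  have D2: "D \<ge> 2" by (simp add: D_def)
  have H: "summable (\<lambda>j. norm (blinfun_apply (calA A P (m + j) n) x)) \<and>
         (\<Sum>j. norm (blinfun_apply (calA A P (m + j) n) x))
           + (\<Sum>k=n..m. norm (blinfun_apply (calA A (compl_proj P) k n) x))
         \<le> D * (norm (blinfun_apply (calA A P m n) x)
                 + norm (blinfun_apply (calA A (compl_proj P) m n) x))"
    if "1 \<le> n" "n \<le> m" for m n x
  proof -
    have "D0 * (norm (blinfun_apply (calA A P m n) x) + norm (blinfun_apply (calA A (compl_proj P) m n) x))
       \<le> D * (norm (blinfun_apply (calA A P m n) x) + norm (blinfun_apply (calA A (compl_proj P) m n) x))"
      by (intro mult_right_mono) (auto simp: D_def)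
    then show ?thesis using H0[OF that, of x] by linarith
  qed
  define q where "q = 1 - 1 / D"
  have q0: "q > 0" and q1: "q < 1" using D2 by (auto simp: q_def field_simps)
  have stab: "norm (blinfun_apply (calA A P m n) x) \<le> q ^ (m - n) * (D * norm (blinfun_apply (P n) x))"
    if "1 \<le> n" "n \<le> m" for m n x
  proof -
    define a where "a j = norm (blinfun_apply (calA A P j n) x)" for j
    define S where "S m = (\<Sum>j. a (m + j))" for m
    have HH: "summable (\<lambda>j. a (m + j)) \<and> S m \<le> D * a m" if "n \<le> m" for m
      using H[OF \<open>1 \<le> n\<close> that, of "blinfun_apply (P n) x"] F6[OF \<open>1 \<le> n\<close>, of _ x]
      by (simp add: a_def S_def)
    have a0: "a j \<ge> 0" for j by (simp add: a_def)
    have split: "S m = a m + S (Suc m)" if "n \<le> m" for m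
    proof -
      have "(\<Sum>j. a (m + Suc j)) = (\<Sum>j. a (m + j)) - a (m + 0)"
        by (rule suminf_split_head) (use HH[OF that] in auto)
      then show ?thesis by (simp add: S_def)
    qed
    have Snn: "S m \<ge> 0" if "n \<le> m" for m
      unfolding S_def using HH[OF that] a0 by (intro suminf_nonneg) auto
    have step: "S (Suc m) \<le> q * S m" if "n \<le> m" for m
    proof -
      have "S m \<le> D * a m" using HH[OF that] by simp
      then have "S m / D \<le> a m" using D2 by (simp add: field_simps)
      moreover have "q * S m = S m - S m / D" by (simp add: q_def algebra_simps)
      ultimately show ?thesis using split[OF that] by linarith
    qed
    have ind: "S (n + i) \<le> q ^ i * S n" for i
    proof (induction i)
      case 0 then show ?case by simp
    next
      case (Suc i)
      have "S (n + Suc i) \<le> q * S (n + i)" using step[of "n+i"] by simp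
      also have "\<dots> \<le> q * (q ^ i * S n)" using Suc q0 by (intro mult_left_mono) auto
      finally show ?case by (simp add: algebra_simps)
    qed
    have "a m \<le> S m" using split[OF that(2)] Snn[of "Suc m"] that by simp
    also have "\<dots> \<le> q ^ (m - n) * S n" using ind[of "m - n"] that by simp
    also have "\<dots> \<le> q ^ (m - n) * (D * a n)" using HH[of n] q0 by (intro mult_left_mono) auto
    also have "a n = norm (blinfun_apply (P n) x)" by (simp add: a_def cP)
    finally show ?thesis by (simp add: a_def)
  qed
  have unst: "norm (x - blinfun_apply (P n) x) \<le> q ^ (m - n) * (D * norm (blinfun_apply (calA A (compl_proj P) m n) x))"
    if "1 \<le> n" "n \<le> m" for m n x
  proof -
    define b where "b k = norm (blinfun_apply (calA A (compl_proj P) k n) x)" for k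
    define T where "T m = (\<Sum>k=n..m. b k)" for m
    have HH: "T m \<le> D * b m" if "n \<le> m" for m
      using H[OF \<open>1 \<le> n\<close> that, of "x - blinfun_apply (P n) x"] F6[OF \<open>1 \<le> n\<close>, of _ x]
      by (simp add: b_def T_def)
    have step: "T m \<le> q * T (Suc m)" if "n \<le> m" for m
    proof -
      have sp: "T (Suc m) = T m + b (Suc m)" using that by (simp add: T_def)
      have "T (Suc m) \<le> D * b (Suc m)" using HH[of "Suc m"] that by simp
      then have "T (Suc m) / D \<le> b (Suc m)" using D2 by (simp add: field_simps)
      moreover have "q * T (Suc m) = T (Suc m) - T (Suc m) / D" by (simp add: q_def algebra_simps)
      ultimately show ?thesis using sp by linarith
    qed
    have ind: "T n \<le> q ^ i * T (n + i)" for i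
    proof (induction i)
      case 0 then show ?case by simp
    next
      case (Suc i)
      have "T n \<le> q ^ i * T (n + i)" by (rule Suc)
      also have "\<dots> \<le> q ^ i * (q * T (Suc (n + i)))" using step[of "n+i"] q0 by (intro mult_left_mono) auto
      finally show ?case by (simp add: algebra_simps)
    qed
    have "norm (x - blinfun_apply (P n) x) = T n" by (simp add: T_def b_def cQ)
    also have "\<dots> \<le> q ^ (m - n) * T m" using ind[of "m - n"] that by simp
    also have "\<dots> \<le> q ^ (m - n) * (D * b m)" using HH[OF that(2)] q0 by (intro mult_left_mono) auto
    finally show ?thesis by (simp add: b_def)
  qed
  define \<alpha> where "\<alpha> = ln (1 / q)"
  have al: "\<alpha> > 0" using q0 q1 by (simp add: \<alpha>_def)
  have ex: "exp (\<alpha> * real k) * q ^ k = 1" for k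
  proof -
    have "exp (\<alpha> * real k) = (1 / q) ^ k" using q0 by (simp add: exp_of_nat2_mult \<alpha>_def)
    then show ?thesis using q0 by (simp add: power_divide)
  qed
  have key: "exp (\<alpha> * real (m - n)) * (norm (blinfun_apply (calA A P m n) x) + norm (blinfun_apply (compl_proj P n) x))
       \<le> D * (norm (blinfun_apply (P n) x) + norm (blinfun_apply (calA A (compl_proj P) m n) x))"
    if nm: "1 \<le> (n::nat)" "n \<le> m" for m n x
  proof -
    let ?e = "exp (\<alpha> * real (m - n))"
    let ?u = "norm (blinfun_apply (P n) x)"
    let ?v = "norm (blinfun_apply (calA A (compl_proj P) m n) x)"
    let ?k = "q ^ (m - n)"
    have e0: "?e > 0" by simp
    have "?e * (norm (blinfun_apply (calA A P m n) x) + norm (blinfun_apply (compl_proj P n) x))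
       \<le> ?e * (?k * (D * ?u) + ?k * (D * ?v))"
    proof (rule mult_left_mono)
      show "norm (blinfun_apply (calA A P m n) x) + norm (blinfun_apply (compl_proj P n) x) \<le> ?k * (D * ?u) + ?k * (D * ?v)"
        unfolding cQP using stab[OF nm, of x] unst[OF nm, of x] by (rule add_mono)
    qed (rule less_imp_le[OF e0])
    also have "?e * (?k * (D * ?u) + ?k * (D * ?v)) = (?e * ?k) * (D * (?u + ?v))"
      by (simp add: algebra_simps)
    also have "(?e * ?k) * (D * (?u + ?v)) = D * (?u + ?v)"
      using ex[of "m - n"] by (simp only: mult_1)
    finally show ?thesis .
  qed
  show ?thesis unfolding P_unif_exp_dich_def
    using key D2 al by (intro exI[of _ D] exI[of _ \<alpha>] conjI allI impI) (linarith, assumption, blast)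
qed

end

theorem mainTheorem3:
  fixes A P :: "nat \<Rightarrow> ('a::banach \<Rightarrow>\<^sub>L 'a)"
  assumes proj: "\<And>n. 1 \<le> n \<Longrightarrow> P n o\<^sub>L P n = P n"
    and compat: "\<And>n. 1 \<le> n \<Longrightarrow> A (n + 1) o\<^sub>L P n = P (n + 1) o\<^sub>L A (n + 1)"
  shows "P_unif_exp_dich A P \<longleftrightarrow>
    (\<exists>D::real. D > 0 \<and>
      (\<forall>m n x. 1 \<le> n \<longrightarrow> n \<le> m \<longrightarrow>
         summable (\<lambda>j. norm (blinfun_apply (calA A P (m + j) n) x)) \<and>
         (\<Sum>j. norm (blinfun_apply (calA A P (m + j) n) x))
           + (\<Sum>k=n..m. norm (blinfun_apply (calA A (compl_proj P) k n) x))
         \<le> D * (norm (blinfun_apply (calA A P m n) x)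
                 + norm (blinfun_apply (calA A (compl_proj P) m n) x))))"
  using dich_imp[of P A, OF proj compat] imp_dich[of P A, OF proj compat] by blast

end
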